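(* For every $0<\varepsilon<1$ there exists an integer $\Theta=\Theta(\varepsilon)>0$ depending only on $\varepsilon$ (and not on $q$-independent data such as $m,n$) such that for all $m,n$, all $A\in\mathbb F_q^{m\times n}$ and all nonempty $U\subseteq[n]$ the following holds. Choose $\boldsymbol\theta\in\{1,\dots,\Theta\}$ uniformly at random and then $(\mathbf i_1,\dots,\mathbf i_{\boldsymbol\theta})\in U^{\boldsymbol\theta}$ uniformly at random, and let $\hat A=A[\mathbf i_1,\dots,\mathbf i_{\boldsymbol\theta}]$. Then $$\mathbb P\big[\mu_{\hat A,U}\text{ is }\varepsilon\text{-symmetric}\big]>1-\varepsilon.$$
   Context: $q\ge2$ is a fixed prime power. For a matrix $A\in\mathbb F_q^{m\times n}$ the Boltzmann distribution $\mu_A$ is the uniform distribution on $\ker(A)\subseteq\mathbb F_q^n$; for $U\subseteq[n]$, $\mu_{A,U}$ denotes its marginal on the coordinates in $U$, and $\mu_{A,i}$, $\mu_{A,i,j}$ denote one- and two-coordinate marginals. For $i_1,\dots,i_\ell\in[n]$, $A[i_1,\dots,i_\ell]$ is the matrix obtained from $A$ by appending $\ell$ rows, the $j$-th of which has entry $1$ in column $i_j$ and zeros elsewhere. A probability measure $\mu$ on $\Omega^U$ ($\Omega$, $U$ finite) is $\varepsilon$-symmetric if $\sum_{i,j\in U}d_{TV}(\mu_{i,j},\mu_i\otimes\mu_j)<\varepsilon|U|^2$, where $\mu_i,\mu_{i,j}$ are marginals and $d_{TV}$ is total variation distance. *)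

theory Defs
  imports "HOL-Probability.Probability"
begin

text \<open>Matrices A in F^{m x n} are represented as functions nat => nat => 'a,
  with rows 0..<m and columns 0..<n (column index i stands for i+1 in [n]).
  Vectors in F^n are functions nat => 'a vanishing outside {..<n}.\<close>

definition ker_mat :: "nat \<Rightarrow> nat \<Rightarrow> (nat \<Rightarrow> nat \<Rightarrow> 'a::field) \<Rightarrow> (nat \<Rightarrow> 'a) set" where
  "ker_mat m n A = {x. (\<forall>j. j \<ge> n \<longrightarrow> x j = 0) \<and> (\<forall>r<m. (\<Sum>j<n. A r j * x j) = 0)}"

definition boltzmann :: "nat \<Rightarrow> nat \<Rightarrow> (nat \<Rightarrow> nat \<Rightarrow> 'a::{field,finite}) \<Rightarrow> (nat \<Rightarrow> 'a) pmf" where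
  "boltzmann m n A = pmf_of_set (ker_mat m n A)"

definition boltzmann_marg :: "nat \<Rightarrow> nat \<Rightarrow> (nat \<Rightarrow> nat \<Rightarrow> 'a::{field,finite}) \<Rightarrow> nat set \<Rightarrow> (nat \<Rightarrow> 'a) pmf" where
  "boltzmann_marg m n A U = map_pmf (\<lambda>x. restrict x U) (boltzmann m n A)"

text \<open>A[i_1,...,i_l]: append l rows, the j-th having a 1 in column i_j.\<close>
definition append_rows :: "nat \<Rightarrow> (nat \<Rightarrow> nat \<Rightarrow> 'a::field) \<Rightarrow> nat list \<Rightarrow> nat \<Rightarrow> nat \<Rightarrow> 'a" where
  "append_rows m A is = (\<lambda>r j. if r < m then A r j
       else if r - m < length is then (if j = is ! (r - m) then 1 else 0) else 0)"

definition tv_dist :: "'b::finite pmf \<Rightarrow> 'b pmf \<Rightarrow> real" where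
  "tv_dist p q = (\<Sum>z\<in>UNIV. \<bar>pmf p z - pmf q z\<bar>) / 2"

definition eps_symmetric :: "real \<Rightarrow> nat set \<Rightarrow> (nat \<Rightarrow> 'b::finite) pmf \<Rightarrow> bool" where
  "eps_symmetric \<epsilon> U \<mu> \<longleftrightarrow>
     (\<Sum>i\<in>U. \<Sum>j\<in>U. tv_dist (map_pmf (\<lambda>x. (x i, x j)) \<mu>)
        (pair_pmf (map_pmf (\<lambda>x. x i) \<mu>) (map_pmf (\<lambda>x. x j) \<mu>))) < \<epsilon> * real (card U) ^ 2"

end

theory Submission imports Defs begin

definition Kp :: "(nat \<Rightarrow> 'a::zero) set \<Rightarrow> nat set \<Rightarrow> (nat \<Rightarrow> 'a) set" where
  "Kp K S = {x\<in>K. \<forall>i\<in>S. x i = 0}"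

definition frz :: "(nat \<Rightarrow> 'a::zero) set \<Rightarrow> nat set \<Rightarrow> nat set" where
  "frz K S = {j. \<forall>x\<in>Kp K S. x j = 0}"

definition badp :: "(nat \<Rightarrow> 'a::zero) set \<Rightarrow> nat set \<Rightarrow> nat \<Rightarrow> nat \<Rightarrow> bool" where
  "badp K S i j \<longleftrightarrow> j \<notin> frz K S \<and> j \<in> frz K (insert i S)"

lemma Kp_insert: "Kp K (insert i S) = {y\<in>Kp K S. y i = 0}"
  by (auto simp: Kp_def)

lemma frz_mono: "frz K S \<subseteq> frz K (insert i S)"
  by (auto simp: frz_def Kp_def)

lemma card_frz_insert:
  assumes "finite U"
  shows "card (frz K (insert i S) \<inter> U) = card (frz K S \<inter> U) + card {j\<in>U. badp K S i j}"
proof -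
  have "frz K (insert i S) \<inter> U = (frz K S \<inter> U) \<union> {j\<in>U. badp K S i j}"
    using frz_mono[of K S i] by (auto simp: badp_def)
  moreover have "(frz K S \<inter> U) \<inter> {j\<in>U. badp K S i j} = {}" by (auto simp: badp_def)
  ultimately show ?thesis using assms by (simp add: card_Un_disjoint)
qed

lemma finite_vanish: "finite {x::nat \<Rightarrow> 'a::{zero,finite}. \<forall>j. j \<ge> n \<longrightarrow> x j = 0}"
proof -
  have "{x::nat \<Rightarrow> 'a. \<forall>j. j \<ge> n \<longrightarrow> x j = 0} \<subseteq> (\<lambda>f j. if j < n then f j else 0) ` (PiE {..<n} (\<lambda>_. UNIV))"
  proof
    fix x :: "nat \<Rightarrow> 'a" assume "x \<in> {x. \<forall>j. j \<ge> n \<longrightarrow> x j = 0}"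
    then have "x = (\<lambda>j. if j < n then restrict x {..<n} j else 0)" by (auto simp: fun_eq_iff)
    then show "x \<in> (\<lambda>f j. if j < n then f j else 0) ` (PiE {..<n} (\<lambda>_. UNIV))"
      by (intro image_eqI[of _ _ "restrict x {..<n}"]) auto
  qed
  then show ?thesis by (rule finite_subset) (intro finite_imageI finite_PiE; simp)
qed

lemma ker_finite: "finite (ker_mat m n (A::nat\<Rightarrow>nat\<Rightarrow>'a::{field,finite}))"
  by (rule finite_subset[OF _ finite_vanish[of n]]) (auto simp: ker_mat_def)

lemma ker_zero: "(\<lambda>_. 0) \<in> ker_mat m n A" by (simp add: ker_mat_def)

lemma ker_lin: "x \<in> ker_mat m n A \<Longrightarrow> y \<in> ker_mat m n A \<Longrightarrow> (\<lambda>k. x k + c * y k) \<in> ker_mat m n A"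
  unfolding ker_mat_def
  by (auto simp: distrib_left sum.distrib mult.left_commute sum_distrib_left[symmetric])

lemma Kp_lin: "x \<in> Kp (ker_mat m n A) S \<Longrightarrow> y \<in> Kp (ker_mat m n A) S \<Longrightarrow> (\<lambda>k. x k + c * y k) \<in> Kp (ker_mat m n A) S"
  unfolding Kp_def using ker_lin by auto

lemma Kp_fin: "finite (Kp (ker_mat m n (A::nat\<Rightarrow>nat\<Rightarrow>'a::{field,finite})) S)"
  unfolding Kp_def by (rule finite_subset[OF _ ker_finite]) auto

lemma Kp_ne: "Kp (ker_mat m n A) S \<noteq> {}"
  unfolding Kp_def using ker_zero by auto

lemma append_row_sum:
  assumes "k < length is" "is ! k < n"
  shows "(\<Sum>j<n. append_rows m A is (m + k) j * x j) = x (is ! k)"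
proof -
  have "(\<Sum>j<n. append_rows m A is (m + k) j * x j) = (\<Sum>j<n. if j = is ! k then x j else 0)"
    using assms by (intro sum.cong) (auto simp: append_rows_def)
  then show ?thesis using assms by simp
qed

lemma ker_append:
  assumes "set is \<subseteq> {..<n}"
  shows "ker_mat (m + length is) n (append_rows m A is) = Kp (ker_mat m n A) (set is)"
proof -
  have rowsA: "\<And>r j. r < m \<Longrightarrow> append_rows m A is r j = A r j" by (simp add: append_rows_def)
  have rs: "\<And>k x. k < length is \<Longrightarrow> (\<Sum>j<n. append_rows m A is (m + k) j * x j) = x (is ! k)"
    using assms by (intro append_row_sum) (auto dest: nth_mem)
  show ?thesis
  proof (intro set_eqI iffI)
    fix x assume x: "x \<in> ker_mat (m + length is) n (append_rows m A is)"
    have "\<forall>i\<in>set is. x i = 0"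
    proof
      fix i assume "i \<in> set is"
      then obtain k where k: "k < length is" "i = is ! k" by (auto simp: in_set_conv_nth)
      then show "x i = 0" using x rs[of k x] by (auto simp: ker_mat_def)
    qed
    moreover have "\<forall>r<m. (\<Sum>j<n. A r j * x j) = 0"
    proof (intro allI impI)
      fix r assume r: "r < m"
      with x have "(\<Sum>j<n. append_rows m A is r j * x j) = 0" by (auto simp: ker_mat_def)
      then show "(\<Sum>j<n. A r j * x j) = 0" using rowsA[OF r] by simp
    qed
    ultimately show "x \<in> Kp (ker_mat m n A) (set is)" using x by (auto simp: ker_mat_def Kp_def)
  next
    fix x assume x: "x \<in> Kp (ker_mat m n A) (set is)"
    have "\<forall>r<m + length is. (\<Sum>j<n. append_rows m A is r j * x j) = 0"
    proof (intro allI impI)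
      fix r assume r: "r < m + length is"
      show "(\<Sum>j<n. append_rows m A is r j * x j) = 0"
      proof (cases "r < m")
        case True then show ?thesis using x rowsA by (auto simp: ker_mat_def Kp_def)
      next
        case False
        then obtain k where "r = m + k" "k < length is" using r by (metis add_diff_inverse_nat nat_add_left_cancel_less)
        then show ?thesis using rs[of k x] x by (auto simp: Kp_def)
      qed
    qed
    then show "x \<in> ker_mat (m + length is) n (append_rows m A is)" using x by (auto simp: ker_mat_def Kp_def)
  qed
qed


lemma pmf_map_of_set:
  assumes "finite V" "V \<noteq> {}"
  shows "pmf (map_pmf f (pmf_of_set V)) z = card {x\<in>V. f x = z} / card V"
  using assms by (simp add: pmf_map measure_pmf_of_set vimage_def Int_def)

lemma indep_lemma:
  fixes V :: "(nat \<Rightarrow> 'a::{field,finite}) set"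
  assumes fin: "finite V" and ne: "V \<noteq> {}"
    and lin: "\<And>x y c. x \<in> V \<Longrightarrow> y \<in> V \<Longrightarrow> (\<lambda>k. x k + c * y k) \<in> V"
    and h: "(\<forall>x\<in>V. x j = 0) \<or> (\<exists>y\<in>V. y i = 0 \<and> y j \<noteq> 0)"
  shows "map_pmf (\<lambda>x. (x i, x j)) (pmf_of_set V) =
     pair_pmf (map_pmf (\<lambda>x. x i) (pmf_of_set V)) (map_pmf (\<lambda>x. x j) (pmf_of_set V))"
proof (rule pmf_eqI)
  fix z :: "'a \<times> 'a"
  obtain a b where z: "z = (a, b)" by (cases z)
  define N where "N = (\<lambda>a b. card {x\<in>V. x i = a \<and> x j = b})"
  define Ni where "Ni = (\<lambda>a. card {x\<in>V. x i = a})"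
  define Nj where "Nj = (\<lambda>b. card {x\<in>V. x j = b})"
  have e1: "pmf (map_pmf (\<lambda>x. (x i, x j)) (pmf_of_set V)) z = N a b / card V"
    unfolding z N_def by (subst pmf_map_of_set[OF fin ne]) simp
  have e2: "pmf (pair_pmf (map_pmf (\<lambda>x. x i) (pmf_of_set V)) (map_pmf (\<lambda>x. x j) (pmf_of_set V))) z
      = Ni a / card V * (Nj b / card V)"
    unfolding z Ni_def Nj_def pmf_pair by (simp add: pmf_map_of_set[OF fin ne])
  have cV: "card V > 0" using fin ne by (simp add: card_gt_0_iff)
  have sumi: "Ni a = (\<Sum>b'\<in>UNIV. N a b')"
    unfolding Ni_def N_def
    using sum.group[of "{x\<in>V. x i = a}" UNIV "\<lambda>x. x j" "\<lambda>_. 1::nat"] fin by simp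
  have sumj: "Nj b = (\<Sum>a'\<in>UNIV. N a' b)"
    unfolding Nj_def N_def
    using sum.group[of "{x\<in>V. x j = b}" UNIV "\<lambda>x. x i" "\<lambda>_. 1::nat"] fin by (simp add: conj_ac)
  have sumV: "card V = (\<Sum>a'\<in>UNIV. Ni a')"
    unfolding Ni_def
    using sum.group[of V UNIV "\<lambda>x. x i" "\<lambda>_. 1::nat"] fin by simp
  show "pmf (map_pmf (\<lambda>x. (x i, x j)) (pmf_of_set V)) z =
     pmf (pair_pmf (map_pmf (\<lambda>x. x i) (pmf_of_set V)) (map_pmf (\<lambda>x. x j) (pmf_of_set V))) z"
    unfolding e1 e2
  proof (cases "\<forall>x\<in>V. x j = 0")
    case True
    show "N a b / card V = Ni a / card V * (Nj b / card V)"
    proof (cases "b = 0")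
      case b: True
      have "N a b = Ni a" unfolding N_def Ni_def using True b by (intro arg_cong[where f=card]) auto
      moreover have "Nj b = card V" unfolding Nj_def using True b by (intro arg_cong[where f=card]) auto
      ultimately show ?thesis using cV by simp
    next
      case b: False
      have "{x\<in>V. x i = a \<and> x j = b} = {}" "{x\<in>V. x j = b} = {}" using True b by auto
      then have "N a b = 0" "Nj b = 0" unfolding N_def Nj_def by (metis card.empty)+
      then show ?thesis by simp
    qed
  next
    case False
    with h obtain y where y: "y \<in> V" "y i = 0" "y j \<noteq> 0" by auto
    have le: "N a' b1 \<le> N a' b2" for a' b1 b2
    proof -
      define c where "c = (b2 - b1) / y j"
      define f where "f = (\<lambda>x k. x k + c * y k)"
      have "inj_on f {x\<in>V. x i = a' \<and> x j = b1}"
        by (rule inj_onI) (auto simp: f_def fun_eq_iff)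
      moreover have "f ` {x\<in>V. x i = a' \<and> x j = b1} \<subseteq> {x\<in>V. x i = a' \<and> x j = b2}"
      proof
        fix w assume "w \<in> f ` {x\<in>V. x i = a' \<and> x j = b1}"
        then obtain x where x: "x \<in> V" "x i = a'" "x j = b1" and w: "w = f x" by auto
        have "w \<in> V" unfolding w f_def using lin x(1) y(1) by blast
        moreover have "w i = a'" using w x y by (simp add: f_def)
        moreover have "w j = b2" using w x y by (simp add: f_def c_def)
        ultimately show "w \<in> {x\<in>V. x i = a' \<and> x j = b2}" by simp
      qed
      ultimately show ?thesis unfolding N_def
        by (intro card_inj_on_le) (use fin in auto)
    qed
    have inv: "N a' b1 = N a' b2" for a' b1 b2 using le[of a' b1 b2] le[of a' b2 b1] by simp
    define q where "q = card (UNIV :: 'a set)"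
    have Nia: "Ni a' = q * N a' b" for a'
    proof -
      have "Ni a' = (\<Sum>b'\<in>UNIV. N a' b')" unfolding Ni_def N_def
        using sum.group[of "{x\<in>V. x i = a'}" UNIV "\<lambda>x. x j" "\<lambda>_. 1::nat"] fin by simp
      also have "\<dots> = (\<Sum>b'\<in>(UNIV::'a set). N a' b)" by (rule sum.cong) (rule refl, rule inv)
      finally show ?thesis by (simp add: q_def)
    qed
    have "card V = q * Nj b"
      unfolding sumV sumj Nia by (simp add: sum_distrib_left)
    moreover note Nia[of a]
    ultimately show "N a b / card V = Ni a / card V * (Nj b / card V)"
      using cV by (simp add: field_simps)
  qed
qed


lemma tv_le1: "tv_dist p q \<le> 1"
proof -
  have "(\<Sum>z\<in>UNIV. \<bar>pmf p z - pmf q z\<bar>) \<le> (\<Sum>z\<in>UNIV. pmf p z + pmf q z)"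
    by (intro sum_mono) (simp add: abs_le_iff pmf_nonneg add_increasing add_increasing2)
  also have "\<dots> = 2" by (simp add: sum.distrib sum_pmf_eq_1)
  finally show ?thesis by (simp add: tv_dist_def)
qed

lemma tv_self: "tv_dist p p = 0" by (simp add: tv_dist_def)

lemma tv_bad:
  fixes A :: "nat \<Rightarrow> nat \<Rightarrow> 'a::{field,finite}" and m n :: nat and S :: "nat set"
  defines "P \<equiv> pmf_of_set (Kp (ker_mat m n A) S)"
  shows "tv_dist (map_pmf (\<lambda>x. (x i, x j)) P) (pair_pmf (map_pmf (\<lambda>x. x i) P) (map_pmf (\<lambda>x. x j) P))
     \<le> (if badp (ker_mat m n A) S i j then 1 else 0)"
proof (cases "badp (ker_mat m n A) S i j")
  case True then show ?thesis by (simp add: tv_le1)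
next
  case False
  let ?V = "Kp (ker_mat m n A) S"
  have h: "(\<forall>x\<in>?V. x j = 0) \<or> (\<exists>y\<in>?V. y i = 0 \<and> y j \<noteq> 0)"
    using False unfolding badp_def frz_def Kp_insert by auto
  have "map_pmf (\<lambda>x. (x i, x j)) P = pair_pmf (map_pmf (\<lambda>x. x i) P) (map_pmf (\<lambda>x. x j) P)"
    unfolding P_def by (rule indep_lemma[OF Kp_fin Kp_ne Kp_lin h])
  then show ?thesis using False by (simp add: tv_self)
qed

lemma marg_eq:
  fixes A :: "nat \<Rightarrow> nat \<Rightarrow> 'a::{field,finite}"
  assumes "set is \<subseteq> U" "U \<subseteq> {..<n}"
  shows "boltzmann_marg (m + length is) n (append_rows m A is) U =
    map_pmf (\<lambda>x. restrict x U) (pmf_of_set (Kp (ker_mat m n A) (set is)))"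
  unfolding boltzmann_marg_def boltzmann_def using assms by (subst ker_append) auto

definition Bc :: "(nat \<Rightarrow> 'a::zero) set \<Rightarrow> nat set \<Rightarrow> nat set \<Rightarrow> nat" where
  "Bc K U S = (\<Sum>i\<in>U. card {j\<in>U. badp K S i j})"

lemma good:
  fixes A :: "nat \<Rightarrow> nat \<Rightarrow> 'a::{field,finite}"
  assumes "set is \<subseteq> U" "U \<subseteq> {..<n}"
    and lt: "real (Bc (ker_mat m n A) U (set is)) < \<epsilon> * real (card U) ^ 2"
  shows "eps_symmetric \<epsilon> U (boltzmann_marg (m + length is) n (append_rows m A is) U)"
proof -
  define P where "P = pmf_of_set (Kp (ker_mat m n A) (set is))"
  have fU: "finite U" using assms(2) finite_subset by blast
  have mm: "boltzmann_marg (m + length is) n (append_rows m A is) U = map_pmf (\<lambda>x. restrict x U) P"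
    unfolding P_def by (rule marg_eq[OF assms(1,2)])
  have c1: "map_pmf (\<lambda>x. (x i, x j)) (map_pmf (\<lambda>x. restrict x U) P) = map_pmf (\<lambda>x. (x i, x j)) P"
    if "i \<in> U" "j \<in> U" for i j
    using that by (simp add: map_pmf_comp)
  have c2: "map_pmf (\<lambda>x. x i) (map_pmf (\<lambda>x. restrict x U) P) = map_pmf (\<lambda>x. x i) P"
    if "i \<in> U" for i
    using that by (simp add: map_pmf_comp)
  have "(\<Sum>i\<in>U. \<Sum>j\<in>U. tv_dist (map_pmf (\<lambda>x. (x i, x j)) (map_pmf (\<lambda>x. restrict x U) P))
        (pair_pmf (map_pmf (\<lambda>x. x i) (map_pmf (\<lambda>x. restrict x U) P)) (map_pmf (\<lambda>x. x j) (map_pmf (\<lambda>x. restrict x U) P))))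
      = (\<Sum>i\<in>U. \<Sum>j\<in>U. tv_dist (map_pmf (\<lambda>x. (x i, x j)) P)
        (pair_pmf (map_pmf (\<lambda>x. x i) P) (map_pmf (\<lambda>x. x j) P)))"
    by (intro sum.cong refl) (simp add: c1 c2)
  also have "\<dots> \<le> (\<Sum>i\<in>U. \<Sum>j\<in>U. (if badp (ker_mat m n A) (set is) i j then 1 else 0))"
    unfolding P_def by (intro sum_mono tv_bad)
  also have "\<dots> = real (Bc (ker_mat m n A) U (set is))"
    unfolding Bc_def using fU by (simp add: sum.If_cases Int_def)
  finally show ?thesis unfolding eps_symmetric_def mm using lt by linarith
qed


definition LL :: "nat set \<Rightarrow> nat \<Rightarrow> nat list set" where
  "LL U t = {xs. set xs \<subseteq> U \<and> length xs = t}"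

lemma LL_fin: "finite U \<Longrightarrow> finite (LL U t)"
  unfolding LL_def by (rule finite_lists_length_eq)

lemma LL_card: "finite U \<Longrightarrow> card (LL U t) = card U ^ t"
  unfolding LL_def by (rule card_lists_length_eq)

lemma LL_ne: "U \<noteq> {} \<Longrightarrow> LL U t \<noteq> {}"
proof -
  assume "U \<noteq> {}" then obtain u where "u \<in> U" by auto
  then have "replicate t u \<in> LL U t" by (auto simp: LL_def)
  then show ?thesis by auto
qed

lemma sum_LL_Suc:
  fixes g :: "nat list \<Rightarrow> real"
  assumes "finite U"
  shows "(\<Sum>l\<in>LL U (Suc t). g l) = (\<Sum>l\<in>LL U t. \<Sum>i\<in>U. g (i # l))"
proof -
  have "(\<Sum>l\<in>LL U (Suc t). g l) = (\<Sum>p\<in>LL U t \<times> U. g ((\<lambda>(xs, n). n # xs) p))"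
    unfolding LL_def lists_length_Suc_eq
    by (subst sum.reindex) (auto simp: inj_on_def)
  also have "\<dots> = (\<Sum>l\<in>LL U t. \<Sum>i\<in>U. g (i # l))"
    by (simp add: sum.cartesian_product split_beta)
  finally show ?thesis .
qed

definition Fc :: "(nat \<Rightarrow> 'a::zero) set \<Rightarrow> nat set \<Rightarrow> nat set \<Rightarrow> nat" where
  "Fc K U S = card (frz K S \<inter> U)"

lemma Fc_insert_sum:
  assumes "finite U"
  shows "(\<Sum>i\<in>U. real (Fc K U (insert i S))) = real (card U) * real (Fc K U S) + real (Bc K U S)"
  unfolding Fc_def Bc_def using assms by (simp add: card_frz_insert[OF assms] sum.distrib)

lemma SF_rec:
  assumes "finite U"
  shows "(\<Sum>l\<in>LL U (Suc t). real (Fc K U (set l))) =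
     real (card U) * (\<Sum>l\<in>LL U t. real (Fc K U (set l))) + (\<Sum>l\<in>LL U t. real (Bc K U (set l)))"
  unfolding sum_LL_Suc[OF assms]
  by (simp add: Fc_insert_sum[OF assms] sum.distrib sum_distrib_left)

lemma avg_bound:
  assumes fU: "finite U" and ne: "U \<noteq> {}"
  shows "(\<Sum>t\<in>{1..T}. (\<Sum>l\<in>LL U t. real (Bc K U (set l))) / real (card U) ^ t) \<le> real (card U) ^ 2"
proof -
  define u where "u = real (card U)"
  have u0: "u > 0" using fU ne by (simp add: u_def card_gt_0_iff)
  define f where "f t = (\<Sum>l\<in>LL U t. real (Fc K U (set l))) / u ^ t" for t
  define b where "b t = (\<Sum>l\<in>LL U t. real (Bc K U (set l))) / u ^ t" for t
  have rec: "f (Suc t) = f t + b t / u" for t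
    unfolding f_def b_def SF_rec[OF fU] u_def[symmetric] using u0
    by (simp add: field_simps)
  have tel: "(\<Sum>t\<in>{1..T'}. b t) = u * (f (Suc T') - f 1)" for T'
  proof (induction T')
    case 0 then show ?case by simp
  next
    case (Suc T')
    have "(\<Sum>t\<in>{1..Suc T'}. b t) = (\<Sum>t\<in>{1..T'}. b t) + b (Suc T')" by simp
    also have "\<dots> = u * (f (Suc T') - f 1) + u * (f (Suc (Suc T')) - f (Suc T'))"
      using Suc rec[of "Suc T'"] u0 by (simp add: field_simps)
    also have "\<dots> = u * (f (Suc (Suc T')) - f 1)" by (simp add: field_simps)
    finally show ?case .
  qed
  have fle: "f t \<le> u" for t
  proof -
    have "(\<Sum>l\<in>LL U t. real (Fc K U (set l))) \<le> (\<Sum>l\<in>LL U t. u)"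
      unfolding u_def Fc_def using fU by (intro sum_mono) (simp add: card_mono)
    also have "\<dots> = u * u ^ t" using LL_card[OF fU] by (simp add: u_def)
    finally show ?thesis unfolding f_def using u0 by (simp add: field_simps)
  qed
  have fge: "f t \<ge> 0" for t unfolding f_def using u0 by (simp add: sum_nonneg)
  have "(\<Sum>t\<in>{1..T}. b t) \<le> u * u"
    unfolding tel using fle[of "Suc T"] fge[of 1] u0 by (simp add: mult_left_mono)
  then show ?thesis unfolding b_def u_def by (simp add: power2_eq_square)
qed


theorem lemma2p3:
  fixes \<epsilon> :: real
  assumes "0 < \<epsilon>" and "\<epsilon> < 1"
  shows "\<exists>\<Theta>::nat. \<Theta> > 0 \<and>
    (\<forall>(m::nat) (n::nat) (A :: nat \<Rightarrow> nat \<Rightarrow> 'a::{field,finite}) (U::nat set).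
       U \<subseteq> {..<n} \<longrightarrow> U \<noteq> {} \<longrightarrow>
       measure_pmf.prob
         (bind_pmf (pmf_of_set {1..\<Theta>})
            (\<lambda>\<theta>. pmf_of_set {is. length is = \<theta> \<and> set is \<subseteq> U}))
         {is. eps_symmetric \<epsilon> U (boltzmann_marg (m + length is) n (append_rows m A is) U)}
       > 1 - \<epsilon>)"
proof -
  define T where "T = nat \<lceil>1 / \<epsilon>^2\<rceil> + 1"
  have Tpos: "T > 0" unfolding T_def by simp
  have Tbig: "real T > 1 / \<epsilon>^2"
  proof -
    have "1 / \<epsilon>^2 \<le> real (nat \<lceil>1 / \<epsilon>^2\<rceil>)" by linarith
    then show ?thesis unfolding T_def by (simp only: of_nat_add of_nat_1)
  qed
  have key: "1 / (\<epsilon> * real T) < \<epsilon>"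
  proof -
    have "1 < \<epsilon>^2 * real T" using Tbig assms(1) by (simp add: field_simps)
    then show ?thesis using assms(1) Tpos by (simp add: field_simps power2_eq_square)
  qed
  show ?thesis
  proof (intro exI[of _ T] conjI Tpos allI impI)
    fix m n :: nat and A :: "nat \<Rightarrow> nat \<Rightarrow> 'a::{field,finite}" and U :: "nat set"
    assume Un: "U \<subseteq> {..<n}" and ne: "U \<noteq> {}"
    have fU: "finite U" using Un finite_subset by blast
    define K where "K = ker_mat m n A"
    define X where "X = {is. eps_symmetric \<epsilon> U (boltzmann_marg (m + length is) n (append_rows m A is) U)}"
    define u where "u = real (card U)"
    have u0: "u > 0" using fU ne by (simp add: u_def card_gt_0_iff)
    have Leq: "{is. length is = \<theta> \<and> set is \<subseteq> U} = LL U \<theta>" for \<theta> by (auto simp: LL_def)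
    define SB where "SB t = (\<Sum>l\<in>LL U t. real (Bc K U (set l)))" for t
    have avg: "(\<Sum>t\<in>{1..T}. SB t / u ^ t) \<le> u ^ 2"
      unfolding SB_def u_def by (rule avg_bound[OF fU ne])
    have per: "real (card (LL U t \<inter> X)) / real (card (LL U t)) \<ge> 1 - SB t / u ^ t / (\<epsilon> * u ^ 2)" for t
    proof -
      have sub: "\<epsilon> * u ^ 2 \<le> real (Bc K U (set l))" if "l \<in> LL U t - X" for l
      proof (rule ccontr)
        assume "\<not> ?thesis"
        then have "real (Bc K U (set l)) < \<epsilon> * real (card U) ^ 2" by (simp add: u_def)
        then have "l \<in> X" unfolding X_def K_def using that Un
          by (intro CollectI good) (auto simp: LL_def)
        then show False using that by simp
      qed
      have fL: "finite (LL U t)" using LL_fin[OF fU] .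
      have "(\<Sum>l\<in>LL U t - X. \<epsilon> * u ^ 2) \<le> (\<Sum>l\<in>LL U t - X. real (Bc K U (set l)))"
        by (intro sum_mono sub)
      also have "\<dots> \<le> SB t" unfolding SB_def using fL by (intro sum_mono2) auto
      finally have d: "\<epsilon> * u ^ 2 * real (card (LL U t - X)) \<le> SB t" by (simp add: mult.commute)
      have cL: "real (card (LL U t)) = u ^ t" using LL_card[OF fU] by (simp add: u_def)
      have split: "real (card (LL U t)) = real (card (LL U t \<inter> X)) + real (card (LL U t - X))"
        using card_Int_Diff[OF fL, of X] by simp
      have pos: "\<epsilon> * u ^ 2 > 0" "u ^ t > 0" using u0 assms(1) by simp_all
      have "real (card (LL U t - X)) \<le> SB t / (\<epsilon> * u ^ 2)"
        using d pos by (simp add: field_simps)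
      then have "real (card (LL U t - X)) / u ^ t \<le> SB t / (\<epsilon> * u ^ 2) / u ^ t"
        using pos by (intro divide_right_mono) auto
      then have "real (card (LL U t - X)) / u ^ t \<le> SB t / u ^ t / (\<epsilon> * u ^ 2)"
        by (simp add: divide_divide_eq_left mult.commute)
      moreover have "real (card (LL U t \<inter> X)) / real (card (LL U t)) = 1 - real (card (LL U t - X)) / u ^ t"
        using split cL pos by (simp add: field_simps)
      ultimately show ?thesis by linarith
    qed
    have prob: "measure_pmf.prob (bind_pmf (pmf_of_set {1..T}) (\<lambda>\<theta>. pmf_of_set (LL U \<theta>))) X
       = (\<Sum>t\<in>{1..T}. real (card (LL U t \<inter> X)) / real (card (LL U t))) / real T"
    proof -
      have "measure_pmf.prob (bind_pmf (pmf_of_set {1..T}) (\<lambda>\<theta>. pmf_of_set (LL U \<theta>))) X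
          = measure_pmf.expectation (bind_pmf (pmf_of_set {1..T}) (\<lambda>\<theta>. pmf_of_set (LL U \<theta>))) (indicator X)"
        by simp
      also have "\<dots> = (\<Sum>t\<in>{1..T}. measure_pmf.expectation (pmf_of_set (LL U t)) (indicator X) /\<^sub>R real (card {1..T}))"
        using Tpos LL_fin[OF fU] LL_ne[OF ne]
        by (intro pmf_expectation_bind_pmf_of_set) auto
      also have "\<dots> = (\<Sum>t\<in>{1..T}. real (card (LL U t \<inter> X)) / real (card (LL U t)) / real T)"
      proof (intro sum.cong refl)
        fix t
        have "measure_pmf.expectation (pmf_of_set (LL U t)) (indicator X) = measure_pmf.prob (pmf_of_set (LL U t)) X"
          by simp
        also have "\<dots> = real (card (LL U t \<inter> X)) / real (card (LL U t))"
          using LL_fin[OF fU] LL_ne[OF ne] by (simp add: measure_pmf_of_set)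
        finally show "measure_pmf.expectation (pmf_of_set (LL U t)) (indicator X) /\<^sub>R real (card {1..T})
           = real (card (LL U t \<inter> X)) / real (card (LL U t)) / real T"
          by (simp add: divide_inverse_commute)
      qed
      also have "\<dots> = (\<Sum>t\<in>{1..T}. real (card (LL U t \<inter> X)) / real (card (LL U t))) / real T"
        by (simp add: sum_divide_distrib)
      finally show ?thesis .
    qed
    have "(\<Sum>t\<in>{1..T}. real (card (LL U t \<inter> X)) / real (card (LL U t)))
        \<ge> (\<Sum>t\<in>{1..T}. 1 - SB t / u ^ t / (\<epsilon> * u ^ 2))"
      by (intro sum_mono per)
    also have "(\<Sum>t\<in>{1..T}. 1 - SB t / u ^ t / (\<epsilon> * u ^ 2)) = real T - (\<Sum>t\<in>{1..T}. SB t / u ^ t) / (\<epsilon> * u ^ 2)"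
      by (simp add: sum_subtractf sum_divide_distrib)
    also have "\<dots> \<ge> real T - u ^ 2 / (\<epsilon> * u ^ 2)"
      using avg u0 assms(1) by (intro diff_left_mono divide_right_mono) auto
    finally have "(\<Sum>t\<in>{1..T}. real (card (LL U t \<inter> X)) / real (card (LL U t))) / real T
        \<ge> (real T - u ^ 2 / (\<epsilon> * u ^ 2)) / real T"
      using Tpos by (intro divide_right_mono) auto
    moreover have "(real T - u ^ 2 / (\<epsilon> * u ^ 2)) / real T = 1 - 1 / (\<epsilon> * real T)"
      using Tpos u0 assms(1) by (simp add: field_simps)
    ultimately have "measure_pmf.prob (bind_pmf (pmf_of_set {1..T}) (\<lambda>\<theta>. pmf_of_set (LL U \<theta>))) X
       \<ge> 1 - 1 / (\<epsilon> * real T)" unfolding prob by simp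
    then show "measure_pmf.prob
         (bind_pmf (pmf_of_set {1..T})
            (\<lambda>\<theta>. pmf_of_set {is. length is = \<theta> \<and> set is \<subseteq> U}))
         {is. eps_symmetric \<epsilon> U (boltzmann_marg (m + length is) n (append_rows m A is) U)}
       > 1 - \<epsilon>" unfolding Leq X_def[symmetric] using key by linarith
  qed
qed

end
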